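(* Let $k \geq 1$ be an integer and let $G=(V,E)$ be a $k$-connected graph with $n \geq 9$ vertices, $e$ edges, minimum degree $\delta$ and maximum degree $\Delta$. If any one of the following five conditions holds, then $G$ is traceable: [1] $$Z_1(G) \geq (n - k - 2)\Delta^2 + \frac{e^2}{2(k + 2)} + \frac{(k + 2) \Delta^3}{2 \delta};$$ [2] $$F(G) \leq (n - k - 2) \delta^3 + \frac{\delta (2 (k + 2)^2 \delta^2 - e^2)}{k + 2};$$ [3] $$F(G) \leq (n - k - 2) \delta^3 + \frac{\delta}{k + 2} \left( 2 (k + 2) \left((k + 2) \delta^2 + \frac{e^2}{n - k - 2}\right) - e^2 - 2 (k + 2) (n - k - 2) \Delta^2\right);$$ [4] $$Inv(G) \leq \frac{n - k - 2}{\Delta} + \frac{2 (k + 2)^2 \delta^2 - e^2}{(k + 2) \Delta^3};$$ [5] $$Inv(G) \leq \frac{n - k - 2}{\Delta} + \frac{1}{(k + 2) \Delta^3} \left( 2 (k + 2) \left((k + 2) \delta^2 + \frac{e^2}{n - k - 2}\right) - e^2 - 2 (k + 2) (n - k - 2) \Delta^2\right).$$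
   Context: Graphs are finite, undirected, without loops or multiple edges. $d(u)$ denotes the degree of vertex $u$; $\delta$ and $\Delta$ are the minimum and maximum degrees. The first Zagreb index is $Z_1(G)=\sum_{u\in V} d(u)^2$, the forgotten topological index is $F(G)=\sum_{u\in V} d(u)^3$, and the inverse degree is $Inv(G)=\sum_{u\in V}\frac{1}{d(u)}$. A graph is traceable if it has a path containing all its vertices. *)

theory Defs
  imports Main Complex_Main
begin

definition simple_graph :: "'a set \<Rightarrow> ('a \<Rightarrow> 'a \<Rightarrow> bool) \<Rightarrow> bool" where
  "simple_graph V E \<longleftrightarrow> finite V \<and> (\<forall>u v. E u v \<longrightarrow> u \<in> V \<and> v \<in> V)
     \<and> (\<forall>u. \<not> E u u) \<and> (\<forall>u v. E u v \<longrightarrow> E v u)"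

definition deg :: "'a set \<Rightarrow> ('a \<Rightarrow> 'a \<Rightarrow> bool) \<Rightarrow> 'a \<Rightarrow> nat" where
  "deg V E u = card {v \<in> V. E u v}"

definition num_edges :: "'a set \<Rightarrow> ('a \<Rightarrow> 'a \<Rightarrow> bool) \<Rightarrow> nat" where
  "num_edges V E = card {{u, v} | u v. u \<in> V \<and> v \<in> V \<and> E u v}"

definition min_deg :: "'a set \<Rightarrow> ('a \<Rightarrow> 'a \<Rightarrow> bool) \<Rightarrow> nat" where
  "min_deg V E = Min (deg V E ` V)"

definition max_deg :: "'a set \<Rightarrow> ('a \<Rightarrow> 'a \<Rightarrow> bool) \<Rightarrow> nat" where
  "max_deg V E = Max (deg V E ` V)"

definition zagreb1 :: "'a set \<Rightarrow> ('a \<Rightarrow> 'a \<Rightarrow> bool) \<Rightarrow> real" where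
  "zagreb1 V E = (\<Sum>u\<in>V. real (deg V E u) ^ 2)"

definition forgotten_index :: "'a set \<Rightarrow> ('a \<Rightarrow> 'a \<Rightarrow> bool) \<Rightarrow> real" where
  "forgotten_index V E = (\<Sum>u\<in>V. real (deg V E u) ^ 3)"

definition inverse_degree :: "'a set \<Rightarrow> ('a \<Rightarrow> 'a \<Rightarrow> bool) \<Rightarrow> real" where
  "inverse_degree V E = (\<Sum>u\<in>V. 1 / real (deg V E u))"

definition connected_on :: "'a set \<Rightarrow> ('a \<Rightarrow> 'a \<Rightarrow> bool) \<Rightarrow> bool" where
  "connected_on S E \<longleftrightarrow> (\<forall>u\<in>S. \<forall>v\<in>S. (\<lambda>x y. x \<in> S \<and> y \<in> S \<and> E x y)\<^sup>*\<^sup>* u v)"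

definition k_connected :: "'a set \<Rightarrow> ('a \<Rightarrow> 'a \<Rightarrow> bool) \<Rightarrow> nat \<Rightarrow> bool" where
  "k_connected V E k \<longleftrightarrow> card V > k \<and>
     (\<forall>S. S \<subseteq> V \<and> card S < k \<longrightarrow> connected_on (V - S) E)"

definition traceable :: "'a set \<Rightarrow> ('a \<Rightarrow> 'a \<Rightarrow> bool) \<Rightarrow> bool" where
  "traceable V E \<longleftrightarrow> (\<exists>p. distinct p \<and> set p = V \<and>
     (\<forall>i. Suc i < length p \<longrightarrow> E (p ! i) (p ! Suc i)))"

end

theory Submission
  imports Defs
begin

definition gpath :: "'a set \<Rightarrow> ('a \<Rightarrow> 'a \<Rightarrow> bool) \<Rightarrow> 'a list \<Rightarrow> bool" where
  "gpath V E p \<longleftrightarrow> distinct p \<and> set p \<subseteq> V \<and> successively E p"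

definition indep :: "('a \<Rightarrow> 'a \<Rightarrow> bool) \<Rightarrow> 'a set \<Rightarrow> bool" where
  "indep E I \<longleftrightarrow> (\<forall>x\<in>I. \<forall>y\<in>I. \<not> E x y)"

lemma last_take_Suc: "i < length q \<Longrightarrow> last (take (Suc i) q) = q ! i"
  by (subst last_conv_nth) (auto simp: min_def intro!: arg_cong[where f="nth q"])

lemma walk_to_path:
  assumes "(\<lambda>x y. x \<in> U \<and> y \<in> U \<and> E x y)\<^sup>*\<^sup>* a b" "a \<in> U"
  shows "\<exists>q. q \<noteq> [] \<and> hd q = a \<and> last q = b \<and> distinct q \<and> set q \<subseteq> U \<and> successively E q"
  using assms
proof (induction rule: rtranclp_induct)
  case base
  then show ?case by (intro exI[of _ "[a]"]) auto
next
  case (step b c)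
  then obtain q where q: "q \<noteq> []" "hd q = a" "last q = b" "distinct q" "set q \<subseteq> U" "successively E q"
    by blast
  show ?case
  proof (cases "c \<in> set q")
    case True
    then obtain i where i: "i < length q" "q ! i = c" by (auto simp: in_set_conv_nth)
    define q' where "q' = take (Suc i) q"
    have "q = q' @ drop (Suc i) q" by (simp add: q'_def)
    then have "successively E q'" using q(6) by (metis successively_append_iff)
    moreover have "q' \<noteq> []" "hd q' = a" "last q' = c" "distinct q'" "set q' \<subseteq> U"
      using q i by (auto simp: q'_def hd_take last_take_Suc dest: in_set_takeD)
    ultimately show ?thesis by blast
  next
    case False
    show ?thesis
      apply (intro exI[of _ "q @ [c]"])
      using q False step by (auto simp: successively_append_iff)
  qed
qed

lemma split3: "i \<le> j \<Longrightarrow> P = take i P @ drop i (take j P) @ drop j P"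
  by (metis append.assoc append_take_drop_id min.absorb1 take_take)

lemma rtranclp_sym:
  assumes "\<And>x y. R x y \<Longrightarrow> R y x" "R\<^sup>*\<^sup>* a b"
  shows "R\<^sup>*\<^sup>* b a"
  using assms(2)
proof (induction rule: rtranclp_induct)
  case base then show ?case by simp
next
  case (step b c)
  then show ?case using assms(1) by (meson converse_rtranclp_into_rtranclp)
qed

lemma key:
  assumes G: "simple_graph V E" and kc: "k_connected V E k"
    and P: "gpath V E P" and longest: "\<And>q. gpath V E q \<Longrightarrow> length q \<le> length P"
    and Pne: "P \<noteq> []" and w: "w \<in> V" "w \<notin> set P"
  shows "\<exists>I \<subseteq> V. w \<in> I \<and> hd P \<in> I \<and> card I \<ge> k + 2 \<and> indep E I"
proof -
  have sym: "\<And>x y. E x y \<Longrightarrow> E y x" and inV: "\<And>x y. E x y \<Longrightarrow> x \<in> V \<and> y \<in> V"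
    and irr: "\<And>x. \<not> E x x" and finV: "finite V"
    using G unfolding simple_graph_def by blast+
  define m where "m = length P"
  define U where "U = V - set P"
  define R where "R = (\<lambda>x y. x \<in> U \<and> y \<in> U \<and> E x y)"
  define H where "H = {x. R\<^sup>*\<^sup>* w x}"
  define T where "T = {i. i < m \<and> (\<exists>h\<in>H. E (P!i) h)}"
  have PV: "set P \<subseteq> V" and Pd: "distinct P" and Ps: "successively E P"
    using P unfolding gpath_def by auto
  have wU: "w \<in> U" using w by (simp add: U_def)
  have HU: "H \<subseteq> U"
  proof
    fix x assume "x \<in> H"
    then have "R\<^sup>*\<^sup>* w x" by (simp add: H_def)
    then show "x \<in> U" using wU by (induction rule: rtranclp_induct) (auto simp: R_def)
  qed
  have wH: "w \<in> H" by (simp add: H_def)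
  have Rsym: "\<And>x y. R x y \<Longrightarrow> R y x" using sym by (auto simp: R_def)
  have Hpath: "\<exists>q. q \<noteq> [] \<and> hd q = x \<and> last q = y \<and> distinct q \<and> set q \<subseteq> U \<and> successively E q"
    if "x \<in> H" "y \<in> H" for x y
  proof -
    have "R\<^sup>*\<^sup>* x w" using that(1) rtranclp_sym[OF Rsym] by (auto simp: H_def)
    then have "R\<^sup>*\<^sup>* x y" using that(2) by (auto simp: H_def)
    then show ?thesis using walk_to_path[of U E x y] that(1) HU unfolding R_def by blast
  qed
  have longer: False if "gpath V E q" "length q > m" for q
    using longest[OF that(1)] that(2) by (simp add: m_def)
  have UV: "U \<subseteq> V" and UP: "U \<inter> set P = {}" by (auto simp: U_def)
  have a: "0 \<notin> T"
  proof
    assume "0 \<in> T"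
    then obtain h where h: "h \<in> H" "E (P!0) h" by (auto simp: T_def)
    have "gpath V E (h # P)"
      using P h HU UV UP Pne sym by (auto simp: gpath_def successively_Cons hd_conv_nth)
    then show False by (rule longer) (simp add: m_def)
  qed
  have a2: "Suc i < m" if "i \<in> T" for i
  proof (rule ccontr)
    assume "\<not> Suc i < m"
    with that have im: "i = m - 1" by (auto simp: T_def)
    from that obtain h where h: "h \<in> H" "E (P!i) h" by (auto simp: T_def)
    have "last P = P ! i" using im Pne by (simp add: last_conv_nth m_def)
    then have "gpath V E (P @ [h])"
      using P h HU UV UP Pne by (auto simp: gpath_def successively_append_iff)
    then show False by (rule longer) (simp add: m_def)
  qed
  have Psplit: "successively E (take a P) \<and> successively E (drop a P)" for a
    using Ps by (metis append_take_drop_id successively_append_iff)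
  have Pdisj: "set (take a P) \<inter> set (drop a P) = {}" for a
    using Pd by (metis append_take_drop_id distinct_append)
  have b: "Suc i \<notin> T" if "i \<in> T" for i
  proof
    assume "Suc i \<in> T"
    then obtain h2 where h2: "h2 \<in> H" "E (P!Suc i) h2" and si: "Suc i < m" by (auto simp: T_def)
    from that obtain h1 where h1: "h1 \<in> H" "E (P!i) h1" by (auto simp: T_def)
    obtain q where q: "q \<noteq> []" "hd q = h1" "last q = h2" "distinct q" "set q \<subseteq> U" "successively E q"
      using Hpath[OF h1(1) h2(1)] by blast
    define A where "A = take (Suc i) P"
    define C where "C = drop (Suc i) P"
    have lA: "last A = P!i" using si by (simp add: A_def last_take_Suc m_def)
    have hC: "hd C = P!Suc i" using si by (simp add: C_def hd_drop_conv_nth m_def)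
    have "set A \<subseteq> set P" "set C \<subseteq> set P" by (auto simp: A_def C_def dest: in_set_takeD in_set_dropD)
    then have "gpath V E (A @ q @ C)"
      using Psplit[of "Suc i"] Pdisj[of "Suc i"] Pd q UV UP PV lA hC h1 h2 sym si
      unfolding gpath_def A_def[symmetric] C_def[symmetric]
      by (auto simp: successively_append_iff A_def C_def m_def)
    moreover have "length (A @ q @ C) > m" using q si by (simp add: A_def C_def m_def)
    ultimately show False by (rule longer)
  qed
  have symsucc: "successively (\<lambda>x y. E y x) xs" if "successively E xs" for xs
    using that sym by (rule successively_mono) auto
  have c1: "\<not> E (P!0) (P!Suc j)" if "j \<in> T" for j
  proof
    assume e: "E (P!0) (P!Suc j)"
    from that obtain h where h: "h \<in> H" "E (P!j) h" by (auto simp: T_def)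
    have sj: "Suc j < m" using a2[OF that] .
    define A where "A = take (Suc j) P"
    define C where "C = drop (Suc j) P"
    have lA: "last A = P!j" using sj by (simp add: A_def last_take_Suc m_def)
    have hA: "hd A = P!0" using sj Pne by (simp add: A_def hd_conv_nth)
    have hC: "hd C = P!Suc j" using sj by (simp add: C_def hd_drop_conv_nth m_def)
    have Ane: "A \<noteq> []" using sj by (auto simp: A_def m_def)
    have "set A \<subseteq> set P" "set C \<subseteq> set P" by (auto simp: A_def C_def dest: in_set_takeD in_set_dropD)
    moreover have "successively E A" "successively E C" using Psplit by (auto simp: A_def C_def)
    moreover have "set A \<inter> set C = {}" using Pdisj by (simp add: A_def C_def)
    moreover have "distinct A" "distinct C" using Pd by (auto simp: A_def C_def)
    ultimately have "gpath V E (h # rev A @ C)"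
    proof -
      assume a1: "set A \<subseteq> set P" "set C \<subseteq> set P" and a2: "successively E A" "successively E C"
        and a3: "set A \<inter> set C = {}" and a4: "distinct A" "distinct C"
      have "h \<in> U" using h HU by auto
      then have hn: "h \<notin> set A" "h \<notin> set C" using a1 UP by auto
      have d: "distinct (h # rev A @ C)" using a3 a4 hn by auto
      have st: "set (h # rev A @ C) \<subseteq> V" using a1 PV \<open>h \<in> U\<close> UV by auto
      have "successively E (rev A)" using symsucc[OF a2(1)] by simp
      moreover have "E h (hd (rev A))" using lA h sym by (simp add: hd_rev)
      moreover have "C = [] \<or> E (last (rev A)) (hd C)" using hA hC e by (simp add: last_rev)
      ultimately have "successively E (h # rev A @ C)" using a2 Ane
        by (simp add: successively_append_iff successively_Cons)
      then show ?thesis using d st by (simp add: gpath_def)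
    qed
    moreover have "length (h # rev A @ C) > m" using sj by (simp add: A_def C_def m_def)
    ultimately show False by (rule longer)
  qed
  have c2: "\<not> E (P!Suc i) (P!Suc j)" if "i \<in> T" "j \<in> T" "i < j" for i j
  proof
    assume e: "E (P!Suc i) (P!Suc j)"
    from that obtain h1 where h1: "h1 \<in> H" "E (P!i) h1" by (auto simp: T_def)
    from that obtain h2 where h2: "h2 \<in> H" "E (P!j) h2" by (auto simp: T_def)
    have sj: "Suc j < m" using a2[OF that(2)] .
    obtain q where q: "q \<noteq> []" "hd q = h1" "last q = h2" "distinct q" "set q \<subseteq> U" "successively E q"
      using Hpath[OF h1(1) h2(1)] by blast
    define A where "A = take (Suc i) P"
    define B where "B = drop (Suc i) (take (Suc j) P)"
    define C where "C = drop (Suc j) P"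
    have PABC: "P = A @ B @ C" unfolding A_def B_def C_def by (rule split3) (use that in simp)
    have lA: "last A = P!i" using sj that by (simp add: A_def last_take_Suc m_def)
    have hB: "hd B = P!Suc i" using sj that by (simp add: B_def hd_drop_conv_nth m_def)
    have lB: "last B = P!j" using sj that by (simp add: B_def last_take_Suc m_def)
    have Bne: "B \<noteq> []" using sj that by (auto simp: B_def m_def)
    have hC: "hd C = P!Suc j" using sj by (simp add: C_def hd_drop_conv_nth m_def)
    have dABC: "distinct (A @ B @ C)" using Pd PABC by simp
    have "set A \<union> set B \<union> set C = set P" using PABC by (metis set_append sup_assoc)
    moreover have "successively E A" "successively E B" "successively E C"
      using Ps PABC by (metis successively_append_iff)+
    moreover note dABC
    moreover from dABC have "distinct A" "distinct B" "distinct C" "set A \<inter> set B = {}"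
      "set A \<inter> set C = {}" "set B \<inter> set C = {}"
      by auto
    ultimately have "gpath V E (A @ q @ rev B @ C)"
    proof -
      assume a1: "set A \<union> set B \<union> set C = set P" and a2: "successively E A" "successively E B" "successively E C"
        and a0: "distinct (A @ B @ C)" and a4: "distinct A" "distinct B" "distinct C" "set A \<inter> set B = {}"
      "set A \<inter> set C = {}" "set B \<inter> set C = {}"
      have qn: "set q \<inter> set P = {}" using q(5) UP by auto
      have d: "distinct (A @ q @ rev B @ C)" using a1 a4 qn q(4) by auto
      have st: "set (A @ q @ rev B @ C) \<subseteq> V" using a1 PV q(5) UV by auto
      have "successively E (rev B)" using symsucc[OF a2(2)] by simp
      moreover have "A = [] \<or> E (last A) (hd q)" using lA h1 q by simp
      moreover have "E (last q) (hd (rev B))" using lB h2 q sym by (simp add: hd_rev)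
      moreover have "C = [] \<or> E (last (rev B)) (hd C)" using hB hC e by (simp add: last_rev)
      ultimately have "successively E (A @ q @ rev B @ C)" using a2 Bne q
        by (simp add: successively_append_iff)
      then show ?thesis using d st by (simp add: gpath_def)
    qed
    moreover have "length (A @ q @ rev B @ C) > m"
    proof -
      have "m = length A + length B + length C" unfolding m_def by (subst PABC) simp
      then show ?thesis using q by simp
    qed
    ultimately show False by (rule longer)
  qed
  have finT: "finite T" by (rule finite_subset[of _ "{..<m}"]) (auto simp: T_def)
  have d: "card T \<ge> k"
  proof (rule ccontr)
    assume "\<not> k \<le> card T"
    define S where "S = (\<lambda>i. P!i) ` T"
    have "card S \<le> card T" unfolding S_def by (rule card_image_le[OF finT])
    then have "card S < k" using \<open>\<not> k \<le> card T\<close> by simp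
    moreover have "S \<subseteq> V" using PV by (auto simp: S_def T_def m_def)
    ultimately have "connected_on (V - S) E" using kc by (simp add: k_connected_def)
    moreover have wS: "w \<in> V - S" using w by (auto simp: S_def T_def m_def)
    moreover have P0S: "P!0 \<in> V - S"
    proof -
      have "P!0 \<in> V" using PV Pne by auto
      moreover have "P!0 \<notin> S"
      proof
        assume "P!0 \<in> S"
        then obtain i where "i \<in> T" "P!0 = P!i" by (auto simp: S_def)
        then have "i = 0" using Pd Pne by (auto simp: T_def m_def nth_eq_iff_index_eq)
        then show False using a \<open>i \<in> T\<close> by simp
      qed
      ultimately show ?thesis by simp
    qed
    ultimately have reach: "(\<lambda>x y. x \<in> V - S \<and> y \<in> V - S \<and> E x y)\<^sup>*\<^sup>* w (P!0)"
      unfolding connected_on_def by blast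
    have "x \<in> H" if "(\<lambda>x y. x \<in> V - S \<and> y \<in> V - S \<and> E x y)\<^sup>*\<^sup>* w x" for x
      using that
    proof (induction rule: rtranclp_induct)
      case base then show ?case by (rule wH)
    next
      case (step x y)
      have xU: "x \<in> U" using step HU by auto
      show ?case
      proof (cases "y \<in> set P")
        case True
        then obtain i where i: "i < m" "y = P!i" by (auto simp: in_set_conv_nth m_def)
        then have "i \<in> T" using step sym by (auto simp: T_def)
        then have "y \<in> S" using i by (auto simp: S_def)
        then show ?thesis using step by auto
      next
        case False
        then have "R x y" using xU step by (auto simp: R_def U_def)
        then show ?thesis using step by (auto simp: H_def)
      qed
    qed
    from this[OF reach] have "P!0 \<in> U" using HU by auto
    then show False using Pne by (auto simp: U_def)
  qed
  define I where "I = {w, P!0} \<union> (\<lambda>i. P!Suc i) ` T"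
  have sT: "Suc i < m" if "i \<in> T" for i using a2 that .
  have IV: "I \<subseteq> V" using w PV Pne sT by (auto simp: I_def m_def)
  have inj: "inj_on (\<lambda>i. P!Suc i) T"
    by (rule inj_onI) (use Pd sT in \<open>auto simp: nth_eq_iff_index_eq m_def\<close>)
  have wnot: "w \<notin> (\<lambda>i. P!Suc i) ` T" using w sT by (auto simp: m_def)
  have p0not: "P!0 \<notin> (\<lambda>i. P!Suc i) ` T"
  proof
    assume "P!0 \<in> (\<lambda>i. P!Suc i) ` T"
    then obtain i where "i \<in> T" "P!0 = P!Suc i" by auto
    moreover have "Suc i < length P" using sT[OF \<open>i \<in> T\<close>] by (simp add: m_def)
    ultimately show False using Pd nth_eq_iff_index_eq[OF Pd, of 0 "Suc i"] by fastforce
  qed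
  have wp0: "w \<noteq> P!0" using w Pne by auto
  have cardI: "card I = card T + 2"
    using card_image[OF inj] wnot p0not wp0 finT by (simp add: I_def)
  have indI: "indep E I"
    unfolding indep_def
  proof (intro ballI)
    fix x y assume x: "x \<in> I" and y: "y \<in> I"
    have nw0: "\<not> E w (P!0)" using a wH sym by (auto simp: T_def Pne m_def)
    have nws: "\<not> E w (P!Suc i)" if "i \<in> T" for i
      using b[OF that] wH sym sT[OF that] by (auto simp: T_def)
    have nss: "\<not> E (P!Suc i) (P!Suc j)" if "i \<in> T" "j \<in> T" for i j
      using c2[OF that] c2[OF that(2,1)] sym irr by (metis linorder_neqE_nat)
    show "\<not> E x y"
      using x y nw0 nws nss c1 sym irr unfolding I_def by (auto; meson)
  qed
  show ?thesis
    using IV cardI d indI Pne by (intro exI[of _ I]) (auto simp: I_def hd_conv_nth)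
qed


lemma sum_deg_card:
  assumes "finite V" "A \<subseteq> V"
  shows "(\<Sum>u\<in>A. deg V E u) = card (SIGMA u:A. {v\<in>V. E u v})"
  using assms by (subst card_SigmaI) (auto simp: deg_def intro: finite_subset)

lemma fin_edges:
  assumes "finite V"
  shows "finite {{u, v} | u v. u \<in> V \<and> v \<in> V \<and> E u v}"
  by (rule finite_subset[of _ "Pow V"]) (use assms in auto)

lemma sum_deg_indep_le:
  assumes G: "simple_graph V E" and IV: "I \<subseteq> V" and ind: "indep E I"
  shows "(\<Sum>u\<in>I. deg V E u) \<le> num_edges V E"
    and "\<not> indep E (V - I) \<Longrightarrow> (\<Sum>u\<in>I. deg V E u) < num_edges V E"
proof -
  have finV: "finite V" and inV: "\<And>x y. E x y \<Longrightarrow> x \<in> V \<and> y \<in> V"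
    using G unfolding simple_graph_def by blast+
  define Ed where "Ed = {{u, v} | u v. u \<in> V \<and> v \<in> V \<and> E u v}"
  define Sg where "Sg = (SIGMA u:I. {v\<in>V. E u v})"
  define f where "f = (\<lambda>(u::'a, v::'a). {u, v})"
  have finE: "finite Ed" using fin_edges[OF finV] by (simp add: Ed_def)
  have inj: "inj_on f Sg"
  proof (rule inj_onI)
    fix p q assume p: "p \<in> Sg" and q: "q \<in> Sg" and eq: "f p = f q"
    obtain u v where puv: "p = (u, v)" by fastforce
    obtain u' v' where quv: "q = (u', v')" by fastforce
    have "u \<in> I" "u' \<in> I" "E u v" "E u' v'" using p q puv quv by (auto simp: Sg_def)
    moreover have "{u, v} = {u', v'}" using eq puv quv by (simp add: f_def)
    ultimately show "p = q" using ind puv quv unfolding indep_def by (metis doubleton_eq_iff)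
  qed
  have sub: "f ` Sg \<subseteq> Ed" using inV by (auto simp: Sg_def f_def Ed_def)
  have eqs: "(\<Sum>u\<in>I. deg V E u) = card (f ` Sg)"
    using sum_deg_card[OF finV IV, of E] card_image[OF inj] by (simp add: Sg_def)
  show "(\<Sum>u\<in>I. deg V E u) \<le> num_edges V E"
    unfolding eqs num_edges_def Ed_def[symmetric] by (rule card_mono[OF finE sub])
  assume "\<not> indep E (V - I)"
  then obtain x y where xy: "x \<in> V - I" "y \<in> V - I" "E x y" by (auto simp: indep_def)
  have "{x, y} \<in> Ed" using xy by (auto simp: Ed_def)
  moreover have "{x, y} \<notin> f ` Sg" using xy by (auto simp: Sg_def f_def doubleton_eq_iff)
  ultimately have "f ` Sg \<subset> Ed" using sub by blast
  then show "(\<Sum>u\<in>I. deg V E u) < num_edges V E"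
    unfolding eqs num_edges_def Ed_def[symmetric] by (rule psubset_card_mono[OF finE])
qed

lemma edges_le_sum_compl:
  assumes G: "simple_graph V E" and ind: "indep E I"
  shows "num_edges V E \<le> (\<Sum>u\<in>V - I. deg V E u)"
proof -
  have finV: "finite V" and sym: "\<And>x y. E x y \<Longrightarrow> E y x"
    using G unfolding simple_graph_def by blast+
  define Ed where "Ed = {{u, v} | u v. u \<in> V \<and> v \<in> V \<and> E u v}"
  define Sg where "Sg = (SIGMA u:V - I. {v\<in>V. E u v})"
  define f where "f = (\<lambda>(u::'a, v::'a). {u, v})"
  have "Ed \<subseteq> f ` Sg"
  proof
    fix z assume "z \<in> Ed"
    then obtain u v where z: "z = {u, v}" "u \<in> V" "v \<in> V" "E u v" by (auto simp: Ed_def)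
    show "z \<in> f ` Sg"
    proof (cases "u \<in> I")
      case True
      then have "v \<notin> I" using ind z by (auto simp: indep_def)
      then have "(v, u) \<in> Sg" using z sym by (auto simp: Sg_def)
      then show ?thesis using z by (auto simp: f_def intro!: image_eqI[of _ _ "(v, u)"])
    next
      case False
      then have "(u, v) \<in> Sg" using z by (auto simp: Sg_def)
      then show ?thesis using z by (auto simp: f_def intro!: image_eqI[of _ _ "(u, v)"])
    qed
  qed
  moreover have "finite Sg" unfolding Sg_def using finV by auto
  ultimately have "card Ed \<le> card Sg" by (meson card_image_le card_mono finite_imageI order_trans)
  also have "card Sg = (\<Sum>u\<in>V - I. deg V E u)" unfolding Sg_def
    using sum_deg_card[OF finV, of "V - I" E] by simp
  finally show ?thesis by (simp add: num_edges_def Ed_def)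
qed


lemma case2:
  fixes n e d D N F M :: real
  assumes MN: "M = n - N" and N: "N > 0" and d: "0 < d" "d \<le> D" and eN: "N * d \<le> e"
    and F1: "F \<ge> (n-1)*d^3 + D^3" and F2: "F \<le> M * d^3 + d * (2 * N^2 * d^2 - e^2) / N"
  shows "D = d \<and> e = N * d"
proof -
  have e2: "(N*d)^2 \<le> e^2" using eN N d by (intro power_mono) auto
  have "d * (2 * N^2 * d^2 - e^2) / N \<le> d * (N^2 * d^2) / N"
    using e2 N d by (intro divide_right_mono mult_left_mono) (auto simp: power_mult_distrib)
  also have "\<dots> = N * d^3" using N by (simp add: power2_eq_square power3_eq_cube)
  finally have "D^3 \<le> d^3" using F1 F2 MN by (simp add: algebra_simps)
  moreover have "d < D \<Longrightarrow> d^3 < D^3" using d by (intro power_strict_mono) auto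
  ultimately have Dd: "D = d" using d by fastforce
  have "N * d^3 \<le> d * (2 * N^2 * d^2 - e^2) / N" using F1 F2 Dd MN by (simp add: algebra_simps)
  then have "N * (N * d^3) \<le> d * (2 * N^2 * d^2 - e^2)" using N by (simp add: field_simps)
  then have "d * e^2 \<le> d * (N^2 * d^2)" by (simp add: algebra_simps power2_eq_square power3_eq_cube)
  then have "e^2 \<le> (N*d)^2" using d by (simp add: power_mult_distrib)
  then have "e \<le> N * d" by (rule power2_le_imp_le) (use N d in auto)
  then show ?thesis using Dd eN by simp
qed

lemma case4:
  fixes n e d D N Iv M :: real
  assumes MN: "M = n - N" and N: "N > 0" and d: "0 < d" "d \<le> D" and eN: "N * d \<le> e"
    and I1: "Iv \<ge> 1/d + (n-1)/D" and I2: "Iv \<le> M / D + (2 * N^2 * d^2 - e^2) / (N * D^3)"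
  shows "D = d \<and> e = N * d"
proof -
  have D: "D > 0" using d by simp
  have "1/D \<le> 1/d" using d by (simp add: frac_le)
  then have "n / D \<le> Iv" using I1 D by (simp add: diff_divide_distrib)
  then have "N / D \<le> (2 * N^2 * d^2 - e^2) / (N * D^3)" using I2 MN by (simp add: diff_divide_distrib)
  then have "N * (N * D^2) \<le> 2 * N^2 * d^2 - e^2" using N D
    by (simp add: field_simps power2_eq_square power3_eq_cube)
  moreover have e2: "(N*d)^2 \<le> e^2" using eN N d by (intro power_mono) auto
  ultimately have A: "(N*D)^2 + e^2 \<le> 2 * (N*d)^2" by (simp add: power_mult_distrib power2_eq_square algebra_simps)
  have B: "(N*d)^2 \<le> (N*D)^2" using N d by (intro power_mono) auto
  have "(N*D)^2 \<le> (N*d)^2" using A e2 by linarith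
  then have "N*D \<le> N*d" by (rule power2_le_imp_le) (use N d in auto)
  then have Dd: "D = d" using N d by simp
  have "e^2 \<le> (N*d)^2" using A B Dd by linarith
  then have "e \<le> N * d" by (rule power2_le_imp_le) (use N d in auto)
  then show ?thesis using Dd eN by simp
qed

lemma case1:
  fixes M e d D N Z :: real
  assumes N: "N > 0" and d: "0 < d" "d \<le> D"
    and Z1: "Z \<le> M*D^2 + D*e" and Z2: "Z \<ge> M * D^2 + e^2 / (2 * N) + N * D^3 / (2 * d)"
  shows "D = d \<and> e = N * d"
proof -
  have D: "D > 0" using d by simp
  have h: "e^2 / (2 * N) + N * D^3 / (2 * d) \<le> D * e" using Z1 Z2 by simp
  have "D^2 \<le> D^3 / d" using d D by (simp add: field_simps power2_eq_square power3_eq_cube mult_left_mono)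
  then have "N * D^2 \<le> N * (D^3 / d)" using N by (intro mult_left_mono) auto
  then have "N * D^2 / 2 \<le> N * D^3 / (2 * d)" by simp
  then have h2: "e^2 / (2 * N) + N * D^2 / 2 \<le> D * e" using h by simp
  then have "e^2 + N^2 * D^2 \<le> 2 * N * D * e" using N by (simp add: field_simps power2_eq_square)
  then have "(e - N * D)^2 \<le> 0" by (simp add: power2_eq_square algebra_simps)
  then have eND: "e = N * D" by simp
  then have "N * D^3 / (2 * d) \<le> N * D^2 / 2" using h N by (simp add: power2_eq_square field_simps)
  then have "D^3 \<le> D^2 * d" using N d by (simp add: field_simps)
  then have "D \<le> d" using D by (simp add: power2_eq_square power3_eq_cube)
  then have "D = d" using d by simp
  then show ?thesis using eND by simp
qed

lemma numeric:
  fixes n e d D kk s sg Z F Iv :: real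
  assumes kk: "kk \<ge> 0" and s: "s \<ge> kk + 2" and d: "0 < d" "d \<le> D" and sd: "s*d \<le> sg"
    and se: "sg \<le> e" and eJ: "e \<le> (n - s)*D"
    and Z: "Z \<le> (n-s)*D^2 + D*sg" and F1: "F \<ge> (n-1)*d^3 + D^3" and I1: "Iv \<ge> 1/d + (n-1)/D"
    and cond: "Z \<ge> (n - kk - 2) * D^2 + e^2 / (2 * (kk + 2)) + (kk + 2) * D^3 / (2 * d)
     \<or> F \<le> (n - kk - 2) * d^3 + d * (2 * (kk + 2)^2 * d^2 - e^2) / (kk + 2)
     \<or> F \<le> (n - kk - 2) * d^3 + d / (kk + 2) *
          (2 * (kk + 2) * ((kk + 2) * d^2 + e^2 / (n - kk - 2)) - e^2 - 2 * (kk + 2) * (n - kk - 2) * D^2)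
     \<or> Iv \<le> (n - kk - 2) / D + (2 * (kk + 2)^2 * d^2 - e^2) / ((kk + 2) * D^3)
     \<or> Iv \<le> (n - kk - 2) / D + 1 / ((kk + 2) * D^3) *
          (2 * (kk + 2) * ((kk + 2) * d^2 + e^2 / (n - kk - 2)) - e^2 - 2 * (kk + 2) * (n - kk - 2) * D^2)"
  shows "D = d \<and> e = (kk + 2) * d"
proof -
  define N where "N = kk + 2"
  define M where "M = n - kk - 2"
  have N: "N > 0" using kk by (simp add: N_def)
  have D: "D > 0" using d by simp
  have "N * d \<le> s * d" using s d by (simp add: N_def)
  then have eN: "N * d \<le> e" using sd se by simp
  have epos: "e > 0" using eN N d by (smt (verit) mult_pos_pos)
  have ns: "n - s > 0" using eJ epos D by (smt (verit) mult_nonpos_nonneg)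
  have Ms: "n - s \<le> M" using s by (simp add: M_def)
  have M: "M > 0" using ns Ms by simp
  have eM: "e \<le> M * D" using eJ Ms D by (smt (verit) mult_right_mono)
  have "e^2 \<le> (M * D)^2" using eM epos by (intro power_mono) auto
  then have eM2: "e^2 / M \<le> M * D^2" using M by (simp add: field_simps power2_eq_square)
  have nN: "n - N = M" by (simp add: N_def M_def)
  have c1: "Z \<ge> M * D^2 + e^2 / (2 * N) + N * D^3 / (2 * d) \<Longrightarrow> ?thesis"
  proof -
    assume a: "Z \<ge> M * D^2 + e^2 / (2 * N) + N * D^3 / (2 * d)"
    have "Z \<le> M*D^2 + D*e"
    proof -
      have "(n-s)*D^2 \<le> M*D^2" using Ms by (simp add: mult_right_mono)
      moreover have "D*sg \<le> D*e" using se D by (simp add: mult_left_mono)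
      ultimately show ?thesis using Z by simp
    qed
    from case1[OF N d this a] show ?thesis by (simp add: N_def)
  qed
  have c2: "F \<le> M * d^3 + d * (2 * N^2 * d^2 - e^2) / N \<Longrightarrow> ?thesis"
    using case2[OF nN[symmetric] N d eN F1] by (simp add: N_def)
  have c4: "Iv \<le> M / D + (2 * N^2 * d^2 - e^2) / (N * D^3) \<Longrightarrow> ?thesis"
    using case4[OF nN[symmetric] N d eN I1] by (simp add: N_def)
  have r3: "M * d^3 + d / N * (2 * N * (N * d^2 + e^2 / M) - e^2 - 2 * N * M * D^2)
      = M * d^3 + d * (2 * N^2 * d^2 - e^2) / N + 2 * d * (e^2 / M - M * D^2)"
    using N by (simp add: field_simps power2_eq_square)
  have r5: "M / D + 1 / (N * D^3) * (2 * N * (N * d^2 + e^2 / M) - e^2 - 2 * N * M * D^2)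
      = M / D + (2 * N^2 * d^2 - e^2) / (N * D^3) + 2 * (e^2 / M - M * D^2) / D^3"
    using N D by (simp add: field_simps power2_eq_square)
  have t3: "2 * d * (e^2 / M - M * D^2) \<le> 0" using eM2 d by (simp add: mult_nonneg_nonpos)
  have t5: "2 * (e^2 / M - M * D^2) / D^3 \<le> 0" using eM2 D by (simp add: divide_nonpos_pos)
  show ?thesis
    using cond
  proof (elim disjE)
    assume "Z \<ge> (n - kk - 2) * D^2 + e^2 / (2 * (kk + 2)) + (kk + 2) * D^3 / (2 * d)"
    then show ?thesis using c1 by (simp add: N_def M_def)
  next
    assume "F \<le> (n - kk - 2) * d^3 + d * (2 * (kk + 2)^2 * d^2 - e^2) / (kk + 2)"
    then show ?thesis using c2 by (simp add: N_def M_def)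
  next
    assume "F \<le> (n - kk - 2) * d^3 + d / (kk + 2) *
          (2 * (kk + 2) * ((kk + 2) * d^2 + e^2 / (n - kk - 2)) - e^2 - 2 * (kk + 2) * (n - kk - 2) * D^2)"
    then have "F \<le> M * d^3 + d / N * (2 * N * (N * d^2 + e^2 / M) - e^2 - 2 * N * M * D^2)"
      by (simp add: N_def M_def)
    then show ?thesis using c2 r3 t3 by linarith
  next
    assume "Iv \<le> (n - kk - 2) / D + (2 * (kk + 2)^2 * d^2 - e^2) / ((kk + 2) * D^3)"
    then show ?thesis using c4 by (simp add: N_def M_def)
  next
    assume "Iv \<le> (n - kk - 2) / D + 1 / ((kk + 2) * D^3) *
          (2 * (kk + 2) * ((kk + 2) * d^2 + e^2 / (n - kk - 2)) - e^2 - 2 * (kk + 2) * (n - kk - 2) * D^2)"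
    then have "Iv \<le> M / D + 1 / (N * D^3) * (2 * N * (N * d^2 + e^2 / M) - e^2 - 2 * N * M * D^2)"
      by (simp add: N_def M_def)
    then show ?thesis using c4 r5 t5 by linarith
  qed
qed


lemma bip_unique:
  assumes con: "connected_on V E" and inV: "\<And>x y. E x y \<Longrightarrow> x \<in> V \<and> y \<in> V"
    and I1: "I1 \<subseteq> V" "indep E I1" "indep E (V - I1)"
    and I2: "I2 \<subseteq> V" "indep E I2" "indep E (V - I2)"
    and x: "x \<in> I1" "x \<in> I2"
  shows "I1 = I2"
proof -
  have "y \<in> I1 \<longleftrightarrow> y \<in> I2" if y: "y \<in> V" for y
  proof -
    have xV: "x \<in> V" using x I1 by auto
    have "(\<lambda>a b. a \<in> V \<and> b \<in> V \<and> E a b)\<^sup>*\<^sup>* x y" using con xV y by (auto simp: connected_on_def)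
    then show ?thesis
    proof (induction rule: rtranclp_induct)
      case base then show ?case using x by simp
    next
      case (step a b)
      have "b \<in> I1 \<longleftrightarrow> a \<notin> I1" using step I1 unfolding indep_def by (metis Diff_iff)
      moreover have "b \<in> I2 \<longleftrightarrow> a \<notin> I2" using step I2 unfolding indep_def by (metis Diff_iff)
      ultimately show ?case using step by simp
    qed
  qed
  then show ?thesis using I1 I2 by blast
qed

lemma gpath_rev:
  assumes "gpath V E P" "\<And>x y. E x y \<Longrightarrow> E y x"
  shows "gpath V E (rev P)"
proof -
  have "successively E P" using assms by (simp add: gpath_def)
  then have "successively (\<lambda>x y. E y x) P" by (rule successively_mono) (use assms(2) in auto)
  then show ?thesis using assms by (simp add: gpath_def)
qed


lemma struct:
  fixes n e d D kk :: real
  assumes G: "simple_graph V E" and Vne: "V \<noteq> {}" and mpos: "min_deg V E > 0"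
    and nd: "n = real (card V)" and ed: "e = real (num_edges V E)" and dd: "d = real (min_deg V E)"
    and Dd: "D = real (max_deg V E)" and kd: "kk = real k"
    and IV: "I \<subseteq> V" and ind: "indep E I" and cI: "card I \<ge> k + 2"
    and cond: "zagreb1 V E \<ge> (n - kk - 2) * D^2 + e^2 / (2 * (kk + 2)) + (kk + 2) * D^3 / (2 * d)
     \<or> forgotten_index V E \<le> (n - kk - 2) * d^3 + d * (2 * (kk + 2)^2 * d^2 - e^2) / (kk + 2)
     \<or> forgotten_index V E \<le> (n - kk - 2) * d^3 + d / (kk + 2) *
          (2 * (kk + 2) * ((kk + 2) * d^2 + e^2 / (n - kk - 2)) - e^2 - 2 * (kk + 2) * (n - kk - 2) * D^2)
     \<or> inverse_degree V E \<le> (n - kk - 2) / D + (2 * (kk + 2)^2 * d^2 - e^2) / ((kk + 2) * D^3)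
     \<or> inverse_degree V E \<le> (n - kk - 2) / D + 1 / ((kk + 2) * D^3) *
          (2 * (kk + 2) * ((kk + 2) * d^2 + e^2 / (n - kk - 2)) - e^2 - 2 * (kk + 2) * (n - kk - 2) * D^2)"
  shows "indep E (V - I) \<and> card I \<le> card (V - I)"
proof -
  have finV: "finite V" using G by (simp add: simple_graph_def)
  define dg where "dg = (\<lambda>u. real (deg V E u))"
  have lo: "d \<le> dg u" if "u \<in> V" for u
    using that finV by (auto simp: dd dg_def min_deg_def)
  have hi: "dg u \<le> D" if "u \<in> V" for u
    using that finV by (auto simp: Dd dg_def max_deg_def)
  have dpos: "0 < d" using mpos dd by simp
  have "Max (deg V E ` V) \<in> deg V E ` V" using finV Vne by (intro Max_in) auto
  then obtain u0 where u0: "u0 \<in> V" "dg u0 = D"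
    by (auto simp: Dd dg_def max_deg_def)
  have "Min (deg V E ` V) \<in> deg V E ` V" using finV Vne by (intro Min_in) auto
  then obtain u1 where u1: "u1 \<in> V" "dg u1 = d"
    by (auto simp: dd dg_def min_deg_def)
  have dD: "d \<le> D" using lo hi u0 by force
  define s where "s = real (card I)"
  define sg where "sg = (\<Sum>u\<in>I. dg u)"
  have finI: "finite I" using IV finV by (rule finite_subset)
  have cJ: "real (card (V - I)) = n - s" using IV finV finI
    by (simp add: nd s_def card_Diff_subset of_nat_diff card_mono)
  have s: "s \<ge> kk + 2" using cI by (simp add: s_def kd)
  have sd: "s * d \<le> sg"
  proof -
    have "(\<Sum>u\<in>I. d) \<le> sg" unfolding sg_def using lo IV by (intro sum_mono) auto
    then show ?thesis by (simp add: s_def mult.commute)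
  qed
  have sgN: "sg = real (\<Sum>u\<in>I. deg V E u)" by (simp add: sg_def dg_def)
  have se: "sg \<le> e" unfolding sgN ed of_nat_le_iff by (rule sum_deg_indep_le(1)[OF G IV ind])
  have eJ: "e \<le> (n - s) * D"
  proof -
    have "e \<le> (\<Sum>u\<in>V - I. dg u)" using edges_le_sum_compl[OF G ind] by (simp add: ed dg_def flip: of_nat_sum)
    also have "\<dots> \<le> (\<Sum>u\<in>V - I. D)" using hi by (intro sum_mono) auto
    also have "\<dots> = (n - s) * D" using cJ by simp
    finally show ?thesis .
  qed
  have Z: "zagreb1 V E \<le> (n - s) * D^2 + D * sg"
  proof -
    have "zagreb1 V E = (\<Sum>u\<in>V - I. dg u ^ 2) + (\<Sum>u\<in>I. dg u ^ 2)"
      unfolding zagreb1_def dg_def using sum.subset_diff[OF IV finV] by simp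
    also have "(\<Sum>u\<in>V - I. dg u ^ 2) \<le> (\<Sum>u\<in>V - I. D ^ 2)"
      using hi lo dpos by (intro sum_mono power_mono) (auto intro: order_trans[OF less_imp_le[OF dpos]])
    also have "(\<Sum>u\<in>I. dg u ^ 2) \<le> (\<Sum>u\<in>I. D * dg u)"
      using hi lo dpos IV by (intro sum_mono) (auto simp: power2_eq_square intro!: mult_right_mono intro: order_trans[OF less_imp_le[OF dpos]])
    finally show ?thesis using cJ by (simp add: sg_def sum_distrib_left)
  qed
  have F1: "forgotten_index V E \<ge> (n - 1) * d^3 + D^3"
  proof -
    have "forgotten_index V E = dg u0 ^ 3 + (\<Sum>u\<in>V - {u0}. dg u ^ 3)"
      unfolding forgotten_index_def dg_def using sum.remove[OF finV u0(1)] by simp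
    moreover have "(\<Sum>u\<in>V - {u0}. d ^ 3) \<le> (\<Sum>u\<in>V - {u0}. dg u ^ 3)"
      using lo dpos by (intro sum_mono power_mono) auto
    moreover have "card (V - {u0}) = card V - 1" using u0 finV by simp
    moreover have "card V \<ge> 1" using u0 finV by (metis One_nat_def Suc_leI card_gt_0_iff empty_iff)
    ultimately show ?thesis using u0 by (simp add: nd of_nat_diff)
  qed
  have I1: "inverse_degree V E \<ge> 1 / d + (n - 1) / D"
  proof -
    have "inverse_degree V E = 1 / dg u1 + (\<Sum>u\<in>V - {u1}. 1 / dg u)"
      unfolding inverse_degree_def dg_def using sum.remove[OF finV u1(1)] by simp
    moreover have "(\<Sum>u\<in>V - {u1}. 1 / D) \<le> (\<Sum>u\<in>V - {u1}. 1 / dg u)"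
    proof (intro sum_mono)
      fix u assume "u \<in> V - {u1}"
      then have p: "0 < dg u" "dg u \<le> D" using lo hi dpos by (auto intro: less_le_trans)
      then show "1 / D \<le> 1 / dg u" by (simp add: field_simps)
    qed
    moreover have "card (V - {u1}) = card V - 1" using u1 finV by simp
    moreover have "card V \<ge> 1" using u1 finV by (metis One_nat_def Suc_leI card_gt_0_iff empty_iff)
    ultimately show ?thesis using u1 by (simp add: nd of_nat_diff)
  qed
  have kk: "kk \<ge> 0" by (simp add: kd)
  have res: "D = d \<and> e = (kk + 2) * d"
    by (rule numeric[OF kk s dpos dD sd se eJ Z F1 I1 cond])
  have reg: "dg u = d" if "u \<in> V" for u using lo hi res that by (meson antisym)
  have sgs: "sg = s * d" using reg IV by (simp add: sg_def s_def subset_iff)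
  have "s * d \<le> (kk + 2) * d" using se sgs res by simp
  then have "s \<le> kk + 2" using dpos by simp
  then have sk: "s = kk + 2" using s by simp
  then have "sg = e" using sgs res by simp
  then have "(\<Sum>u\<in>I. deg V E u) = num_edges V E" unfolding sgN ed of_nat_eq_iff .
  then have i2: "indep E (V - I)" using sum_deg_indep_le(2)[OF G IV ind] by fastforce
  have "(kk + 2) * d \<le> (n - s) * d"
  proof -
    have "e \<le> (\<Sum>u\<in>V - I. dg u)" using edges_le_sum_compl[OF G ind] by (simp add: ed dg_def flip: of_nat_sum)
    also have "\<dots> = (n - s) * d" using reg cJ by simp
    finally show ?thesis using res by simp
  qed
  then have "s \<le> n - s" using dpos sk by simp
  then have "card I \<le> card (V - I)" using cJ by (simp add: s_def)
  then show ?thesis using i2 by simp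
qed


theorem theorem3:
  fixes V :: "'a set" and E :: "'a \<Rightarrow> 'a \<Rightarrow> bool" and k :: nat
  assumes "simple_graph V E"
    and "k \<ge> 1"
    and "k_connected V E k"
    and "card V \<ge> 9"
  defines "n \<equiv> real (card V)"
    and "e \<equiv> real (num_edges V E)"
    and "\<delta> \<equiv> real (min_deg V E)"
    and "\<Delta> \<equiv> real (max_deg V E)"
    and "kk \<equiv> real k"
  assumes "zagreb1 V E \<ge> (n - kk - 2) * \<Delta>^2 + e^2 / (2 * (kk + 2)) + (kk + 2) * \<Delta>^3 / (2 * \<delta>)
     \<or> forgotten_index V E \<le> (n - kk - 2) * \<delta>^3 + \<delta> * (2 * (kk + 2)^2 * \<delta>^2 - e^2) / (kk + 2)
     \<or> forgotten_index V E \<le> (n - kk - 2) * \<delta>^3 + \<delta> / (kk + 2) *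
          (2 * (kk + 2) * ((kk + 2) * \<delta>^2 + e^2 / (n - kk - 2)) - e^2 - 2 * (kk + 2) * (n - kk - 2) * \<Delta>^2)
     \<or> inverse_degree V E \<le> (n - kk - 2) / \<Delta> + (2 * (kk + 2)^2 * \<delta>^2 - e^2) / ((kk + 2) * \<Delta>^3)
     \<or> inverse_degree V E \<le> (n - kk - 2) / \<Delta> + 1 / ((kk + 2) * \<Delta>^3) *
          (2 * (kk + 2) * ((kk + 2) * \<delta>^2 + e^2 / (n - kk - 2)) - e^2 - 2 * (kk + 2) * (n - kk - 2) * \<Delta>^2)"
  shows "traceable V E"
proof (rule ccontr)
  assume nt: "\<not> traceable V E"
  note G = assms(1) and k1 = assms(2) and kc = assms(3) and c9 = assms(4) and cond = assms(10)
  have finV: "finite V" and sym: "\<And>x y. E x y \<Longrightarrow> E y x" and inV: "\<And>x y. E x y \<Longrightarrow> x \<in> V \<and> y \<in> V"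
    and irr: "\<And>x. \<not> E x x"
    using G unfolding simple_graph_def by blast+
  have Vne: "V \<noteq> {}" using c9 by auto
  have con: "connected_on V E"
    using kc k1 unfolding k_connected_def by (metis Diff_empty card.empty empty_subsetI less_le_trans zero_less_one)
  have degpos: "deg V E u > 0" if u: "u \<in> V" for u
  proof -
    have "V - {u} \<noteq> {}"
    proof
      assume "V - {u} = {}"
      then have "V \<subseteq> {u}" by auto
      then have "card V \<le> 1" using card_mono[of "{u}" V] by simp
      then show False using c9 by simp
    qed
    then obtain v where v: "v \<in> V" "v \<noteq> u" by auto
    have "(\<lambda>x y. x \<in> V \<and> y \<in> V \<and> E x y)\<^sup>*\<^sup>* u v" using con u v by (auto simp: connected_on_def)
    then obtain y where "E u y" "y \<in> V" using v(2) by (cases rule: converse_rtranclpE) auto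
    then have "{v \<in> V. E u v} \<noteq> {}" by auto
    then show ?thesis using finV by (simp add: deg_def card_gt_0_iff)
  qed
  have mpos: "min_deg V E > 0"
  proof -
    have "Min (deg V E ` V) \<in> deg V E ` V" using finV Vne by (intro Min_in) auto
    then show ?thesis using degpos by (auto simp: min_deg_def)
  qed
  obtain u where uV: "u \<in> V" using Vne by auto
  have pu: "gpath V E [u]" using uV by (simp add: gpath_def)
  have bnd: "length p \<le> card V" if "gpath V E p" for p
  proof -
    have "length p = card (set p)" using that by (simp add: gpath_def distinct_card)
    also have "\<dots> \<le> card V" using that finV by (intro card_mono) (auto simp: gpath_def)
    finally show ?thesis .
  qed
  have "\<exists>x. gpath V E x \<and> (\<forall>y. gpath V E y \<longrightarrow> length y \<le> length x)"
    by (rule ex_has_greatest_nat[of "gpath V E" "[u]" length "card V + 1"])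
      (use pu bnd in \<open>auto simp: less_Suc_eq_le\<close>)
  then obtain P where P: "gpath V E P" and longest: "\<And>q. gpath V E q \<Longrightarrow> length q \<le> length P"
    by blast
  have Pne: "P \<noteq> []" using longest[OF pu] by auto
  have PV: "set P \<subseteq> V" and Pd: "distinct P" and Ps: "successively E P"
    using P by (auto simp: gpath_def)
  have "set P \<noteq> V"
  proof
    assume "set P = V"
    then have "traceable V E" using Pd Ps unfolding traceable_def
      by (intro exI[of _ P]) (auto simp: successively_nth)
    then show False using nt by simp
  qed
  then obtain w0 where w0: "w0 \<in> V" "w0 \<notin> set P" using PV by blast
  have str: "indep E (V - I) \<and> card I \<le> card (V - I)"
    if "I \<subseteq> V" "indep E I" "card I \<ge> k + 2" for I
    by (rule struct[OF G Vne mpos _ _ _ _ _ that cond]) (simp_all add: n_def e_def \<delta>_def \<Delta>_def kk_def)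
  obtain I0 where I0: "I0 \<subseteq> V" "w0 \<in> I0" "hd P \<in> I0" "card I0 \<ge> k + 2" "indep E I0"
    using key[OF G kc P longest Pne w0] by blast
  have I0s: "indep E (V - I0)" "card I0 \<le> card (V - I0)" using str[OF I0(1) I0(5) I0(4)] by auto
  have offI: "w \<in> I0" if ww: "w \<in> V" "w \<notin> set P" for w
  proof -
    obtain Iw where Iw: "Iw \<subseteq> V" "w \<in> Iw" "hd P \<in> Iw" "card Iw \<ge> k + 2" "indep E Iw"
      using key[OF G kc P longest Pne ww] by blast
    have "indep E (V - Iw)" using str[OF Iw(1) Iw(5) Iw(4)] by auto
    then have "Iw = I0" using bip_unique[OF con inV Iw(1) Iw(5) _ I0(1) I0(5) I0s(1) Iw(3) I0(3)] by simp
    then show ?thesis using Iw by simp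
  qed
  have lastI: "last P \<in> I0"
  proof -
    have Pr: "gpath V E (rev P)" by (rule gpath_rev[OF P sym])
    have lr: "length q \<le> length (rev P)" if "gpath V E q" for q using longest[OF that] by simp
    obtain Ir where Ir: "Ir \<subseteq> V" "w0 \<in> Ir" "hd (rev P) \<in> Ir" "card Ir \<ge> k + 2" "indep E Ir"
      using key[OF G kc Pr lr] Pne w0 by auto
    have "indep E (V - Ir)" using str[OF Ir(1) Ir(5) Ir(4)] by auto
    then have "Ir = I0" using bip_unique[OF con inV Ir(1) Ir(5) _ I0(1) I0(5) I0s(1) Ir(2) I0(2)] by simp
    then show ?thesis using Ir by (simp add: hd_rev)
  qed
  define m where "m = length P"
  define J where "J = V - I0"
  define K where "K = {i. i < m \<and> P!i \<in> J}"
  have JP: "J \<subseteq> set P" using offI by (auto simp: J_def)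
  have JK: "J = (\<lambda>i. P!i) ` K"
  proof
    show "J \<subseteq> (\<lambda>i. P!i) ` K"
    proof
      fix x assume "x \<in> J"
      moreover then have "x \<in> set P" using JP by auto
      then obtain i where "i < m" "P!i = x" by (auto simp: in_set_conv_nth m_def)
      ultimately show "x \<in> (\<lambda>i. P!i) ` K" by (auto simp: K_def)
    qed
  qed (auto simp: K_def)
  have finK: "finite K" by (rule finite_subset[of _ "{..<m}"]) (auto simp: K_def)
  have injK: "inj_on (\<lambda>i. P!i) K" by (rule inj_onI) (use Pd in \<open>auto simp: K_def m_def nth_eq_iff_index_eq\<close>)
  have cJK: "card J = card K" using card_image[OF injK] JK by simp
  have sK: "Suc i < m" if "i \<in> K" for i
  proof (rule ccontr)
    assume "\<not> Suc i < m"
    then have "i = m - 1" using that by (auto simp: K_def)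
    then have "P!i = last P" using Pne by (simp add: last_conv_nth m_def)
    then show False using that lastI by (auto simp: K_def J_def)
  qed
  have sI: "P!Suc i \<in> I0" if "i \<in> K" for i
  proof (rule ccontr)
    assume "P!Suc i \<notin> I0"
    moreover have "P!Suc i \<in> V" using PV sK[OF that] by (auto simp: m_def)
    moreover have "E (P!i) (P!Suc i)" using successively_nth[OF Ps] sK[OF that] by (simp add: m_def)
    moreover have "P!i \<in> V - I0" using that by (auto simp: K_def J_def)
    ultimately show False using I0s(1) unfolding indep_def by blast
  qed
  have sub: "(\<lambda>i. P!Suc i) ` K \<subseteq> I0 - {hd P, w0}"
  proof
    fix x assume "x \<in> (\<lambda>i. P!Suc i) ` K"
    then obtain i where i: "i \<in> K" "x = P!Suc i" by auto
    have "Suc i < length P" using sK[OF i(1)] by (simp add: m_def)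
    then have "x \<in> set P" "x \<noteq> P!0" using i Pd Pne nth_eq_iff_index_eq[OF Pd, of "Suc i" 0] by auto
    then show "x \<in> I0 - {hd P, w0}" using sI[OF i(1)] i w0 Pne by (auto simp: hd_conv_nth)
  qed
  have injS: "inj_on (\<lambda>i. P!Suc i) K"
  proof (rule inj_onI)
    fix i j assume "i \<in> K" "j \<in> K" "P!Suc i = P!Suc j"
    then show "i = j" using sK nth_eq_iff_index_eq[OF Pd, of "Suc i" "Suc j"] by (auto simp: m_def)
  qed
  have finI0: "finite I0" using I0(1) finV by (rule finite_subset)
  have "card K \<le> card (I0 - {hd P, w0})"
    using card_image[OF injS] card_mono[OF _ sub] finI0 by simp
  also have "\<dots> = card I0 - 2"
  proof -
    have "hd P \<noteq> w0" using w0 Pne hd_in_set by metis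
    then show ?thesis using I0 finI0 by (auto simp: card_Diff_subset)
  qed
  finally have "card J < card I0" using cJK I0(4) by simp
  then show False using I0s(2) by (simp add: J_def)
qed


end
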